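(* Consider the discrete-time fractional-order system $\Delta^{\alpha}x[k+1]=Ax[k]+Bu[k]$ with $x[k]\in\mathbb{R}^n$, $u[k]\in\mathbb{R}^p$, and fix $K\ge1$. For $S\subseteq[n]=\{1,\dots,n\}$ let $\mathbb{I}^S$ be the matrix formed by the rows of $I_n$ indexed by $S$, and let $f(S)=\operatorname{rank}([\Theta\ \ \Xi])$ where $\Theta,\Xi$ are constructed as in the context with $C=\mathbb{I}^S$. Then $f:2^{[n]}\to\mathbb{R}$ is submodular, i.e., $f(S\cup T)+f(S\cap T)\le f(S)+f(T)$ for all $S,T\subseteq[n]$.
   Context: $\psi(\alpha_i,j)=\frac{\Gamma(j-\alpha_i)}{\Gamma(-\alpha_i)\Gamma(j+1)}$ and $\Delta^{\alpha_i}x_i[k]=\sum_{j=0}^{k}\psi(\alpha_i,j)x_i[k-j]$. $D(\alpha,j)=\operatorname{diag}(\psi(\alpha_1,j),\dots,\psi(\alpha_n,j))$, $A_0=A-D(\alpha,1)$, $A_j=-D(\alpha,j+1)$ for $j\ge1$, $G_0=I_n$, $G_k=\sum_{j=0}^{k-1}A_jG_{k-1-j}$. $\Theta=[(CG_0)^T,\dots,(CG_{K-1})^T]^T$ and $\Xi$ is the $K\times K$ block lower-triangular matrix whose $(r,s)$ block is $CG_{r-s-1}B$ for $r>s$ and $0$ otherwise. *)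

theory Defs
  imports "HOL-Analysis.Gamma_Function" "Jordan_Normal_Form.DL_Rank" "Jordan_Normal_Form.DL_Submatrix"
begin

definition psi :: "real \<Rightarrow> nat \<Rightarrow> real" where
  "psi a j = Gamma (real j - a) / (Gamma (- a) * Gamma (real j + 1))"

definition frac_diff :: "real \<Rightarrow> (nat \<Rightarrow> real) \<Rightarrow> nat \<Rightarrow> real" where
  "frac_diff a x k = (\<Sum>j = 0..k. psi a j * x (k - j))"

text \<open>D(alpha, j) = diag(psi(alpha_1, j), ..., psi(alpha_n, j)); indices are 0-based.\<close>
definition Dmat :: "nat \<Rightarrow> (nat \<Rightarrow> real) \<Rightarrow> nat \<Rightarrow> real mat" where
  "Dmat n alpha j = mat n n (\<lambda>(i, l). if i = l then psi (alpha i) j else 0)"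

definition Aj :: "nat \<Rightarrow> real mat \<Rightarrow> (nat \<Rightarrow> real) \<Rightarrow> nat \<Rightarrow> real mat" where
  "Aj n A alpha j = (if j = 0 then A - Dmat n alpha 1 else - Dmat n alpha (j + 1))"

fun Glist :: "nat \<Rightarrow> real mat \<Rightarrow> (nat \<Rightarrow> real) \<Rightarrow> nat \<Rightarrow> real mat list" where
  "Glist n A alpha 0 = [1\<^sub>m n]"
| "Glist n A alpha (Suc k) = Glist n A alpha k @
     [foldr (+) (map (\<lambda>j. Aj n A alpha j * (Glist n A alpha k ! (k - j))) [0..<Suc k]) (0\<^sub>m n n)]"

definition Gmat :: "nat \<Rightarrow> real mat \<Rightarrow> (nat \<Rightarrow> real) \<Rightarrow> nat \<Rightarrow> real mat" where
  "Gmat n A alpha k = Glist n A alpha k ! k"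

text \<open>Theta = [C G_0; ...; C G_{K-1}] (C has m rows, G_k is n x n).\<close>
definition Theta :: "nat \<Rightarrow> real mat \<Rightarrow> (nat \<Rightarrow> real) \<Rightarrow> real mat \<Rightarrow> nat \<Rightarrow> real mat" where
  "Theta n A alpha C K = mat (K * dim_row C) n
     (\<lambda>(i, l). (C * Gmat n A alpha (i div dim_row C)) $$ (i mod dim_row C, l))"

text \<open>Xi: K x K block lower triangular, block (r,s) = C G_{r-s-1} B if r > s, else 0.\<close>
definition Xi :: "nat \<Rightarrow> real mat \<Rightarrow> real mat \<Rightarrow> (nat \<Rightarrow> real) \<Rightarrow> real mat \<Rightarrow> nat \<Rightarrow> real mat" where
  "Xi n A B alpha C K = mat (K * dim_row C) (K * dim_col B)
     (\<lambda>(i, l). let r = i div dim_row C; s = l div dim_col B in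
        if s < r then (C * Gmat n A alpha (r - s - 1) * B) $$ (i mod dim_row C, l mod dim_col B)
        else 0)"

definition hcat :: "real mat \<Rightarrow> real mat \<Rightarrow> real mat" where
  "hcat M N = mat (dim_row M) (dim_col M + dim_col N)
     (\<lambda>(i, l). if l < dim_col M then M $$ (i, l) else N $$ (i, l - dim_col M))"

definition mat_rank :: "real mat \<Rightarrow> nat" where
  "mat_rank M = vec_space.rank (dim_row M) M"

definition selector :: "nat \<Rightarrow> nat set \<Rightarrow> real mat" where
  "selector n S = submatrix (1\<^sub>m n) S UNIV"

definition f_rank :: "nat \<Rightarrow> real mat \<Rightarrow> real mat \<Rightarrow> (nat \<Rightarrow> real) \<Rightarrow> nat \<Rightarrow> nat set \<Rightarrow> real" where
  "f_rank n A B alpha K S =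
     real (mat_rank (hcat (Theta n A alpha (selector n S) K) (Xi n A B alpha (selector n S) K)))"

end

theory Submission
  imports Defs "Jordan_Normal_Form.DL_Rank_Submatrix"
begin
context vec_space begin

lemma li_empty: "lin_indpt {}"
  by (metis (no_types) empty_subsetI fin_dim finite_basis_exists subset_li_is_li vec_vs vectorspace.basis_def)

lemma indep_le_rk:
  assumes X: "X \<subseteq> carrier_vec n" "finite X" and U: "U \<subseteq> X" "lin_indpt U"
  shows "card U \<le> vectorspace.dim class_ring (span_vs X)"
proof -
  obtain M where M: "finite M" "maximal M (\<lambda>T. T \<subseteq> X \<and> lin_indpt T)" "U \<subseteq> M"
    using maximal_exists_superset[of X "\<lambda>T. T \<subseteq> X \<and> lin_indpt T" U] X U by blast
  have "vectorspace.dim class_ring (span_vs X) = card M" using dim_span[OF X M(2)] .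
  then show ?thesis using card_mono[OF M(1) M(3)] by simp
qed

lemma exists_max:
  assumes X: "X \<subseteq> carrier_vec n" "finite X"
  obtains M where "finite M" "maximal M (\<lambda>T. T \<subseteq> X \<and> lin_indpt T)"
    "vectorspace.dim class_ring (span_vs X) = card M"
proof -
  obtain M where M: "finite M" "maximal M (\<lambda>T. T \<subseteq> X \<and> lin_indpt T)"
    using maximal_exists_superset[of X "\<lambda>T. T \<subseteq> X \<and> lin_indpt T" "{}"] X li_empty by blast
  show ?thesis using that[OF M dim_span[OF X M(2)]] .
qed

lemma rk_mono:
  assumes X: "X \<subseteq> carrier_vec n" "finite X" and "Z \<subseteq> X"
  shows "vectorspace.dim class_ring (span_vs Z) \<le> vectorspace.dim class_ring (span_vs X)"
proof -
  have Z: "Z \<subseteq> carrier_vec n" "finite Z" using assms finite_subset by auto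
  obtain M where M: "finite M" "maximal M (\<lambda>T. T \<subseteq> Z \<and> lin_indpt T)"
    "vectorspace.dim class_ring (span_vs Z) = card M" using exists_max[OF Z] by blast
  have "M \<subseteq> X" "lin_indpt M" using M(2) assms unfolding maximal_def by auto
  then show ?thesis using indep_le_rk[OF X] M(3) by simp
qed

lemma rk_submod:
  assumes X: "X \<subseteq> carrier_vec n" "finite X" and Y: "Y \<subseteq> carrier_vec n" "finite Y"
  shows "vectorspace.dim class_ring (span_vs (X \<union> Y)) + vectorspace.dim class_ring (span_vs (X \<inter> Y))
     \<le> vectorspace.dim class_ring (span_vs X) + vectorspace.dim class_ring (span_vs Y)"
proof -
  have XY: "X \<inter> Y \<subseteq> carrier_vec n" "finite (X \<inter> Y)" using X by auto
  have UXY: "X \<union> Y \<subseteq> carrier_vec n" "finite (X \<union> Y)" using X Y by auto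
  obtain I where I: "finite I" "maximal I (\<lambda>T. T \<subseteq> X \<inter> Y \<and> lin_indpt T)"
    "vectorspace.dim class_ring (span_vs (X \<inter> Y)) = card I" using exists_max[OF XY] by blast
  have Ii: "I \<subseteq> X \<inter> Y" "lin_indpt I" using I(2) unfolding maximal_def by auto
  obtain J where J: "finite J" "maximal J (\<lambda>T. T \<subseteq> X \<union> Y \<and> lin_indpt T)" "I \<subseteq> J"
    using maximal_exists_superset[of "X \<union> Y" "\<lambda>T. T \<subseteq> X \<union> Y \<and> lin_indpt T" I] UXY Ii by blast
  have Ji: "J \<subseteq> X \<union> Y" "lin_indpt J" using J(2) unfolding maximal_def by auto
  have dJ: "vectorspace.dim class_ring (span_vs (X \<union> Y)) = card J" using dim_span[OF UXY J(2)] .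
  have "J \<inter> (X \<inter> Y) = I"
  proof -
    have "J \<inter> (X \<inter> Y) \<subseteq> X \<inter> Y \<and> lin_indpt (J \<inter> (X \<inter> Y))" using Ji subset_li_is_li by blast
    moreover have "I \<subseteq> J \<inter> (X \<inter> Y)" using J(3) Ii by auto
    ultimately show ?thesis using I(2) unfolding maximal_def by blast
  qed
  have c1: "card (J \<inter> X) \<le> vectorspace.dim class_ring (span_vs X)"
    using indep_le_rk[OF X, of "J \<inter> X"] Ji subset_li_is_li by blast
  have c2: "card (J \<inter> Y) \<le> vectorspace.dim class_ring (span_vs Y)"
    using indep_le_rk[OF Y, of "J \<inter> Y"] Ji subset_li_is_li by blast
  have "card (J \<inter> X) + card (J \<inter> Y) = card ((J \<inter> X) \<union> (J \<inter> Y)) + card ((J \<inter> X) \<inter> (J \<inter> Y))"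
    using card_Un_Int[of "J \<inter> X" "J \<inter> Y"] J(1) by auto
  moreover have "(J \<inter> X) \<union> (J \<inter> Y) = J" using Ji by auto
  moreover have "(J \<inter> X) \<inter> (J \<inter> Y) = I" using \<open>J \<inter> (X \<inter> Y) = I\<close> by auto
  ultimately have "card (J \<inter> X) + card (J \<inter> Y) = card J + card I" by simp
  then show ?thesis using c1 c2 dJ I(3) by linarith
qed

lemma rk_le_gen:
  assumes X: "X \<subseteq> carrier_vec n" "finite X" and Z: "Z \<subseteq> carrier_vec n" "finite Z"
    and sub: "X \<subseteq> span Z"
  shows "vectorspace.dim class_ring (span_vs X) \<le> card Z"
proof -
  obtain M where M: "finite M" "maximal M (\<lambda>T. T \<subseteq> X \<and> lin_indpt T)"
    "vectorspace.dim class_ring (span_vs X) = card M" using exists_max[OF X] by blast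
  have "M \<subseteq> X" "lin_indpt M" using M(2) unfolding maximal_def by auto
  then have "M \<subseteq> span Z" using sub by blast
  from replacement[OF M(1) Z(2) Z(1) \<open>lin_indpt M\<close> this] have "card M \<le> card Z"
    by force
  then show ?thesis using M(3) by linarith
qed

lemma rowdim_le_rank:
  assumes A: "A \<in> carrier_mat m n"
  shows "vectorspace.dim class_ring (span_vs (set (rows A))) \<le> vec_space.rank m A"
proof -
  interpret M: vec_space "TYPE('a)" m .
  have cA: "set (cols A) \<subseteq> carrier_vec m" using A cols_dim by blast
  obtain U where U: "finite U" "maximal U (\<lambda>T. T \<subseteq> set (cols A) \<and> M.lin_indpt T)"
    using M.exists_max[OF cA] by blast
  have rU: "M.rank A = card U" using M.rank_card_indpt[OF A U(2)] .
  have Ui: "U \<subseteq> set (cols A)" "M.lin_indpt U" using U(2) unfolding maximal_def by auto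
  have Uc: "U \<subseteq> carrier_vec m" using Ui cA by auto
  have inspan: "col A j \<in> M.span U" if j: "j < n" for j
  proof (rule ccontr)
    assume nin: "col A j \<notin> M.span U"
    have cj: "col A j \<in> set (cols A)" using j A by (simp add: cols_def)
    have cjc: "col A j \<in> carrier_vec m" using cj cA by auto
    have "col A j \<notin> U" using nin M.in_own_span[OF Uc] by auto
    then have "M.lin_indpt (U \<union> {col A j})"
      using M.lin_dep_iff_in_span[OF Uc Ui(2) cjc] nin by blast
    moreover have "U \<union> {col A j} \<subseteq> set (cols A)" using Ui cj by auto
    ultimately have "U \<union> {col A j} = U" using U(2) unfolding maximal_def by blast
    then show False using \<open>col A j \<notin> U\<close> by auto
  qed
  obtain us where us: "set us = U" "distinct us" using finite_distinct_list[OF U(1)] by blast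
  define r where "r = length us"
  have rcard: "r = card U" using us r_def distinct_card by metis
  define C where "C = mat_of_cols m us"
  have C: "C \<in> carrier_mat m r" unfolding C_def r_def by simp
  have colsC: "cols C = us" unfolding C_def using Uc us by (simp add: cols_mat_of_cols)
  have "\<forall>j. \<exists>x. j < n \<longrightarrow> x \<in> carrier_vec r \<and> C *\<^sub>v x = col A j"
  proof (intro allI)
    fix j
    show "\<exists>x. j < n \<longrightarrow> x \<in> carrier_vec r \<and> C *\<^sub>v x = col A j"
    proof (cases "j < n")
      case True
      have "col A j \<in> M.col_space C" unfolding M.col_space_def colsC us(1) using inspan[OF True] .
      then show ?thesis using M.col_space_eq[OF C] C by auto
    qed simp
  qed
  then obtain y where y: "\<And>j. j < n \<Longrightarrow> y j \<in> carrier_vec r \<and> C *\<^sub>v y j = col A j" by metis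
  define Y where "Y = mat_of_cols r (map y [0..<n])"
  have Y: "Y \<in> carrier_mat r n" unfolding Y_def
    using mat_of_cols_carrier(1)[of r "map y [0..<n]"] length_map[of y "[0..<n]"] length_upt[of 0 n]
    by (metis diff_zero)
  have colY: "col Y j = y j" if j: "j < n" for j
  proof -
    have "col Y j = map y [0..<n] ! j" unfolding Y_def
      by (rule col_mat_of_cols) (use j y in auto)
    then show ?thesis using j by simp
  qed
  have rowA: "row A i = Y\<^sup>T *\<^sub>v row C i" if i: "i < m" for i
  proof (rule eq_vecI)
    show "dim_vec (row A i) = dim_vec (Y\<^sup>T *\<^sub>v row C i)" using A Y by simp
    fix j assume "j < dim_vec (Y\<^sup>T *\<^sub>v row C i)"
    then have j: "j < n" using Y by simp
    have "(Y\<^sup>T *\<^sub>v row C i) $ j = col Y j \<bullet> row C i" using j Y by simp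
    also have "\<dots> = row C i \<bullet> y j"
    proof -
      have "row C i \<in> carrier_vec r" using C i by simp
      moreover have "y j \<in> carrier_vec r" using y[OF j] by blast
      ultimately show ?thesis using colY[OF j] comm_scalar_prod by metis
    qed
    also have "\<dots> = (C *\<^sub>v y j) $ i" using i C by simp
    also have "\<dots> = A $$ (i, j)" using y[OF j] i j A by simp
    finally show "row A i $ j = (Y\<^sup>T *\<^sub>v row C i) $ j" using i j A by simp
  qed
  have "set (rows A) \<subseteq> span (set (rows Y))"
  proof
    fix v assume "v \<in> set (rows A)"
    then obtain i where i: "i < m" "v = row A i" using A by (auto simp: rows_def)
    have "row C i \<in> carrier_vec (dim_row Y)" using C Y i by simp
    moreover have "v \<in> carrier_vec (dim_col Y)" using i A Y by simp
    ultimately have "v \<in> row_space Y" unfolding row_space_eq[OF Y] using rowA[OF i(1)] i(2) by force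
    then show "v \<in> span (set (rows Y))" unfolding row_space_def .
  qed
  moreover have "set (rows A) \<subseteq> carrier_vec n" using A rows_carrier by blast
  moreover have "set (rows Y) \<subseteq> carrier_vec n" using Y rows_carrier by blast
  ultimately have "vectorspace.dim class_ring (span_vs (set (rows A))) \<le> card (set (rows Y))"
    using rk_le_gen by blast
  also have "\<dots> \<le> length (rows Y)" by (rule card_length)
  also have "\<dots> = r" using Y by simp
  finally show ?thesis using rU rcard by simp
qed

lemma rank_eq_rowdim:
  assumes A: "A \<in> carrier_mat m n"
  shows "vec_space.rank m A = vectorspace.dim class_ring (span_vs (set (rows A)))"
proof -
  interpret M: vec_space "TYPE('a)" m .
  have At: "A\<^sup>T \<in> carrier_mat n m" using A by simp
  have "M.rank A = vectorspace.dim class_ring (M.span_vs (set (rows A\<^sup>T)))"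
    unfolding M.rank_def by simp
  also have "\<dots> \<le> vec_space.rank n A\<^sup>T" using M.rowdim_le_rank[OF At] .
  also have "\<dots> = vectorspace.dim class_ring (span_vs (set (rows A)))"
    unfolding rank_def by simp
  finally show ?thesis using rowdim_le_rank[OF A] by simp
qed

end

lemma foldr_carrier:
  assumes "\<And>x. x \<in> set xs \<Longrightarrow> f x \<in> carrier_mat n n"
  shows "foldr (+) (map f xs) (0\<^sub>m n n) \<in> carrier_mat n n"
  using assms by (induction xs) auto

lemma Aj_carrier:
  assumes "A \<in> carrier_mat n n"
  shows "Aj n A alpha j \<in> carrier_mat n n"
  using assms unfolding Aj_def Dmat_def by auto

lemma Glist_props:
  assumes A: "A \<in> carrier_mat n n"
  shows "length (Glist n A alpha k) = Suc k \<and> (\<forall>M \<in> set (Glist n A alpha k). M \<in> carrier_mat n n)"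
proof (induction k)
  case 0
  then show ?case by simp
next
  case (Suc k)
  have "foldr (+) (map (\<lambda>j. Aj n A alpha j * (Glist n A alpha k ! (k - j))) [0..<Suc k]) (0\<^sub>m n n)
        \<in> carrier_mat n n"
  proof (rule foldr_carrier)
    fix j assume "j \<in> set [0..<Suc k]"
    then have "Glist n A alpha k ! (k - j) \<in> set (Glist n A alpha k)" using Suc by auto
    then have "Glist n A alpha k ! (k - j) \<in> carrier_mat n n" using Suc by blast
    then show "Aj n A alpha j * (Glist n A alpha k ! (k - j)) \<in> carrier_mat n n"
      using Aj_carrier[OF A] by (meson mult_carrier_mat)
  qed
  then show ?case using Suc by auto
qed

lemma Gmat_carrier:
  assumes A: "A \<in> carrier_mat n n"
  shows "Gmat n A alpha k \<in> carrier_mat n n"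
  using Glist_props[OF A, of alpha k] unfolding Gmat_def by (metis lessI nth_mem)

lemma selector_dims:
  assumes S: "S \<subseteq> {0..<n}"
  shows "selector n S \<in> carrier_mat (card S) n"
proof -
  have "{i. i < n \<and> i \<in> S} = S" using S by auto
  moreover have "{j. j < n \<and> j \<in> (UNIV::nat set)} = {0..<n}" by auto
  ultimately show ?thesis unfolding selector_def carrier_mat_def by (simp add: dim_submatrix)
qed

lemma selector_mult:
  assumes S: "S \<subseteq> {0..<n}" and M: "M \<in> carrier_mat n q" and t: "t < card S" and l: "l < q"
  shows "(selector n S * M) $$ (t, l) = M $$ (pick S t, l)"
proof -
  have C: "selector n S \<in> carrier_mat (card S) n" using selector_dims[OF S] .
  have eqS: "{i. i < dim_row (1\<^sub>m n :: real mat) \<and> i \<in> S} = S" using S by auto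
  have t': "t < card {i. i < dim_row (1\<^sub>m n :: real mat) \<and> i \<in> S}" using t eqS by simp
  have pk: "pick S t < n" using pick_le[of t n S] t' by simp
  have "(selector n S * M) $$ (t, l) = scalar_prod (row (selector n S) t) (col M l)" using C M t l by simp
  also have "row (selector n S) t = row (1\<^sub>m n) (pick S t)"
    unfolding selector_def using row_submatrix_UNIV[OF t'] .
  also have "\<dots> = unit_vec n (pick S t)" using pk by simp
  also have "scalar_prod (unit_vec n (pick S t)) (col M l) = col M l $ pick S t"
  proof -
    have "col M l \<in> carrier_vec n" using M by (metis carrier_matD(1) col_dim)
    then show ?thesis using scalar_prod_left_unit pk by blast
  qed
  also have "\<dots> = M $$ (pick S t, l)" using M pk l by simp
  finally show ?thesis .
qed


definition wv :: "nat \<Rightarrow> real mat \<Rightarrow> real mat \<Rightarrow> (nat \<Rightarrow> real) \<Rightarrow> nat \<Rightarrow> nat \<Rightarrow> nat \<Rightarrow> real vec" where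
  "wv n A B alpha K r j = vec (n + K * dim_col B) (\<lambda>l. if l < n then Gmat n A alpha r $$ (j, l)
     else (if (l - n) div dim_col B < r
           then (Gmat n A alpha (r - (l - n) div dim_col B - 1) * B) $$ (j, (l - n) mod dim_col B)
           else 0))"

lemma MS_carrier:
  assumes A: "A \<in> carrier_mat n n" and B: "B \<in> carrier_mat n p" and S: "S \<subseteq> {0..<n}"
  shows "hcat (Theta n A alpha (selector n S) K) (Xi n A B alpha (selector n S) K) \<in> carrier_mat (K * card S) (n + K * p)"
  using selector_dims[OF S] B unfolding hcat_def Theta_def Xi_def carrier_mat_def by simp

lemma MS_row:
  assumes A: "A \<in> carrier_mat n n" and B: "B \<in> carrier_mat n p" and S: "S \<subseteq> {0..<n}"
    and i: "i < K * card S"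
  shows "row (hcat (Theta n A alpha (selector n S) K) (Xi n A B alpha (selector n S) K)) i
       = wv n A B alpha K (i div card S) (pick S (i mod card S))"
proof -
  let ?C = "selector n S"
  let ?s = "card S"
  let ?M = "hcat (Theta n A alpha ?C K) (Xi n A B alpha ?C K)"
  have C: "?C \<in> carrier_mat ?s n" using selector_dims[OF S] .
  have M: "?M \<in> carrier_mat (K * ?s) (n + K * p)" using MS_carrier[OF A B S] .
  have spos: "?s > 0" using i by (cases "?s = 0") auto
  have imod: "i mod ?s < ?s" using spos by simp
  have dB: "dim_col B = p" using B by simp
  show ?thesis
  proof (rule eq_vecI)
    show "dim_vec (row ?M i) = dim_vec (wv n A B alpha K (i div ?s) (pick S (i mod ?s)))"
      using M dB unfolding wv_def by simp
    fix l assume "l < dim_vec (wv n A B alpha K (i div ?s) (pick S (i mod ?s)))"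
    then have l: "l < n + K * p" using dB unfolding wv_def by simp
    have lhs: "row ?M i $ l = ?M $$ (i, l)" using M i l by simp
    have rhs: "wv n A B alpha K (i div ?s) (pick S (i mod ?s)) $ l =
      (if l < n then Gmat n A alpha (i div ?s) $$ (pick S (i mod ?s), l)
       else (if (l - n) div p < i div ?s
           then (Gmat n A alpha (i div ?s - (l - n) div p - 1) * B) $$ (pick S (i mod ?s), (l - n) mod p)
           else 0))" using l dB unfolding wv_def by simp
    show "row ?M i $ l = wv n A B alpha K (i div ?s) (pick S (i mod ?s)) $ l"
    proof (cases "l < n")
      case True
      have "?M $$ (i, l) = Theta n A alpha ?C K $$ (i, l)"
        using C i l True unfolding hcat_def Theta_def by simp
      also have "\<dots> = (?C * Gmat n A alpha (i div ?s)) $$ (i mod ?s, l)"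
        using C i True unfolding Theta_def by simp
      also have "\<dots> = Gmat n A alpha (i div ?s) $$ (pick S (i mod ?s), l)"
        using selector_mult[OF S Gmat_carrier[OF A] imod True] .
      finally show ?thesis using lhs rhs True by simp
    next
      case False
      have ln: "l - n < K * p" using l False by simp
      have ppos: "p > 0" using ln by (cases "p = 0") auto
      have lm: "(l - n) mod p < p" using ppos by simp
      let ?G = "Gmat n A alpha (i div ?s - (l - n) div p - 1)"
      have G: "?G \<in> carrier_mat n n" using Gmat_carrier[OF A] .
      have GB: "?G * B \<in> carrier_mat n p" using G B by simp
      have "?M $$ (i, l) = Xi n A B alpha ?C K $$ (i, l - n)"
        using C i l False dB unfolding hcat_def Theta_def Xi_def by simp
      also have "\<dots> = (if (l - n) div p < i div ?s then (?C * ?G * B) $$ (i mod ?s, (l - n) mod p) else 0)"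
        using C i ln dB unfolding Xi_def Let_def by simp
      also have "?C * ?G * B = ?C * (?G * B)" using C G B by simp
      also have "(?C * (?G * B)) $$ (i mod ?s, (l - n) mod p) = (?G * B) $$ (pick S (i mod ?s), (l - n) mod p)"
        using selector_mult[OF S GB imod lm] .
      finally show ?thesis using lhs rhs False by simp
    qed
  qed
qed

lemma MS_rows:
  assumes A: "A \<in> carrier_mat n n" and B: "B \<in> carrier_mat n p" and S: "S \<subseteq> {0..<n}"
  shows "set (rows (hcat (Theta n A alpha (selector n S) K) (Xi n A B alpha (selector n S) K)))
       = {wv n A B alpha K r j | r j. r < K \<and> j \<in> S}"
proof -
  let ?s = "card S"
  let ?M = "hcat (Theta n A alpha (selector n S) K) (Xi n A B alpha (selector n S) K)"
  have M: "?M \<in> carrier_mat (K * ?s) (n + K * p)" using MS_carrier[OF A B S] .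
  have finS: "finite S" using S finite_subset by blast
  have rows_eq: "set (rows ?M) = (\<lambda>i. row ?M i) ` {0..<K * ?s}" using M unfolding rows_def by simp
  show ?thesis
  proof
    show "set (rows ?M) \<subseteq> {wv n A B alpha K r j | r j. r < K \<and> j \<in> S}"
    proof
      fix v assume "v \<in> set (rows ?M)"
      then obtain i where i: "i < K * ?s" "v = row ?M i" using rows_eq by auto
      have spos: "?s > 0" using i by (cases "?s = 0") auto
      have "i div ?s < K" using i(1) by (simp add: less_mult_imp_div_less)
      moreover have "pick S (i mod ?s) \<in> S" using pick_in_set_le spos by simp
      moreover have "v = wv n A B alpha K (i div ?s) (pick S (i mod ?s))" using MS_row[OF A B S i(1)] i(2) by simp
      ultimately show "v \<in> {wv n A B alpha K r j | r j. r < K \<and> j \<in> S}" by blast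
    qed
    show "{wv n A B alpha K r j | r j. r < K \<and> j \<in> S} \<subseteq> set (rows ?M)"
    proof
      fix v assume "v \<in> {wv n A B alpha K r j | r j. r < K \<and> j \<in> S}"
      then obtain r j where rj: "r < K" "j \<in> S" "v = wv n A B alpha K r j" by blast
      define c where "c = card {a \<in> S. a < j}"
      have "{a \<in> S. a < j} \<subset> S" using rj(2) by auto
      then have c: "c < ?s" unfolding c_def using finS psubset_card_mono by blast
      define i where "i = r * ?s + c"
      have "i < r * ?s + ?s" unfolding i_def using c by simp
      also have "\<dots> = Suc r * ?s" by simp
      also have "\<dots> \<le> K * ?s" using rj(1) by (intro mult_right_mono) auto
      finally have i: "i < K * ?s" .
      have idiv: "i div ?s = r" unfolding i_def using c by simp
      have imod: "i mod ?s = c" unfolding i_def using c by simp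
      have "pick S c = j" unfolding c_def using pick_card_in_set[OF rj(2)] .
      then have "row ?M i = v" using MS_row[OF A B S i] idiv imod rj(3) by simp
      then show "v \<in> set (rows ?M)" using rows_eq i by auto
    qed
  qed
qed

theorem theorem2:
  fixes n p K :: nat and A B :: "real mat" and alpha :: "nat \<Rightarrow> real" and S T :: "nat set"
  assumes "A \<in> carrier_mat n n" and "B \<in> carrier_mat n p" and "K \<ge> 1"
    and "S \<subseteq> {0..<n}" and "T \<subseteq> {0..<n}"
  shows "f_rank n A B alpha K (S \<union> T) + f_rank n A B alpha K (S \<inter> T)
           \<le> f_rank n A B alpha K S + f_rank n A B alpha K T"
proof -
  note A = assms(1) and B = assms(2)
  interpret N: vec_space "TYPE(real)" "n + K * p" .
  define W where "W S = {wv n A B alpha K r j | r j. r < K \<and> j \<in> S}" for S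
  have key: "f_rank n A B alpha K U = real (vectorspace.dim class_ring (N.span_vs (W U)))"
    if U: "U \<subseteq> {0..<n}" for U
  proof -
    let ?M = "hcat (Theta n A alpha (selector n U) K) (Xi n A B alpha (selector n U) K)"
    have M: "?M \<in> carrier_mat (K * card U) (n + K * p)" using MS_carrier[OF A B U] .
    have "mat_rank ?M = vec_space.rank (K * card U) ?M" unfolding mat_rank_def using M by simp
    also have "\<dots> = vectorspace.dim class_ring (N.span_vs (set (rows ?M)))" using N.rank_eq_rowdim[OF M] .
    also have "set (rows ?M) = W U" unfolding W_def using MS_rows[OF A B U] .
    finally show ?thesis unfolding f_rank_def by simp
  qed
  have Wprops: "W U \<subseteq> carrier_vec (n + K * p) \<and> finite (W U)" if U: "U \<subseteq> {0..<n}" for U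
  proof
    show "W U \<subseteq> carrier_vec (n + K * p)" unfolding W_def wv_def using B by auto
    have "W U = (\<lambda>(r, j). wv n A B alpha K r j) ` ({..<K} \<times> U)" unfolding W_def by auto
    moreover have "finite U" using U finite_subset by blast
    ultimately show "finite (W U)" by simp
  qed
  have ST: "S \<union> T \<subseteq> {0..<n}" "S \<inter> T \<subseteq> {0..<n}" using assms by auto
  have WU: "W (S \<union> T) = W S \<union> W T" unfolding W_def by blast
  have WI: "W (S \<inter> T) \<subseteq> W S \<inter> W T" unfolding W_def by blast
  have WSc: "W S \<subseteq> carrier_vec (n + K * p)" "finite (W S)" using Wprops assms(4) by auto
  have WTc: "W T \<subseteq> carrier_vec (n + K * p)" "finite (W T)" using Wprops assms(5) by auto
  have WIc: "W S \<inter> W T \<subseteq> carrier_vec (n + K * p)" "finite (W S \<inter> W T)" using WSc by auto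
  have "vectorspace.dim class_ring (N.span_vs (W (S \<inter> T))) \<le> vectorspace.dim class_ring (N.span_vs (W S \<inter> W T))"
    using N.rk_mono[OF WIc WI] .
  moreover have "vectorspace.dim class_ring (N.span_vs (W S \<union> W T)) + vectorspace.dim class_ring (N.span_vs (W S \<inter> W T))
     \<le> vectorspace.dim class_ring (N.span_vs (W S)) + vectorspace.dim class_ring (N.span_vs (W T))"
    using N.rk_submod[OF WSc WTc] .
  ultimately have "vectorspace.dim class_ring (N.span_vs (W (S \<union> T))) + vectorspace.dim class_ring (N.span_vs (W (S \<inter> T)))
     \<le> vectorspace.dim class_ring (N.span_vs (W S)) + vectorspace.dim class_ring (N.span_vs (W T))"
    unfolding WU by linarith
  then show ?thesis unfolding key[OF ST(1)] key[OF ST(2)] key[OF assms(4)] key[OF assms(5)] by linarith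
qed

end
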